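(* Let $f\colon\mathbb{R}\to\mathbb{R}$ have the Baire property, let $I$ be an open interval and let $\varepsilon\ge 0$. The following are equivalent: (i) $f$ satisfies the condition $S(I,A,\varepsilon)$ for every residual set $A\subset\mathbb{R}$; (ii) $f$ satisfies $S(I,A,\varepsilon)$ for every residual set $A\subset\mathbb{R}$ such that $f\restriction A$ is continuous; (iii) there exists a residual set $A\subset\mathbb{R}$ such that $f\restriction A$ is continuous and $f$ satisfies $S(I,A,\varepsilon)$.
   Context: For $a,b\in\mathbb{R}$, $I(a,b)$ denotes the open interval with end-points $a$ and $b$. For $A\subset\mathbb{R}$, an interval $J\subset\mathbb{R}$ and $\varepsilon\ge0$, a function $f\colon\mathbb{R}\to\mathbb{R}$ satisfies the condition $S(J,A,\varepsilon)$ if for all $a,b\in J$ with $f(a)<f(b)$ there exists $x\in A\cap I(a,b)$ with $f(x)\in(f(a)-\varepsilon,f(b)+\varepsilon)$. A function has the Baire property if preimages of open sets have the Baire property; a set is residual if its complement is meager. *)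

theory Defs
  imports "HOL-Analysis.Analysis"
begin

definition nowhere_dense :: "real set \<Rightarrow> bool" where
  "nowhere_dense S \<longleftrightarrow> interior (closure S) = {}"

definition meager :: "real set \<Rightarrow> bool" where
  "meager S \<longleftrightarrow> (\<exists>F :: nat \<Rightarrow> real set. (\<forall>n. nowhere_dense (F n)) \<and> S \<subseteq> (\<Union>n. F n))"

definition residual :: "real set \<Rightarrow> bool" where
  "residual A \<longleftrightarrow> meager (- A)"

definition has_baire_property_set :: "real set \<Rightarrow> bool" where
  "has_baire_property_set S \<longleftrightarrow> (\<exists>U. open U \<and> meager ((S - U) \<union> (U - S)))"

definition has_baire_property :: "(real \<Rightarrow> real) \<Rightarrow> bool" where
  "has_baire_property f \<longleftrightarrow> (\<forall>U. open U \<longrightarrow> has_baire_property_set (f -` U))"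

definition oint :: "real \<Rightarrow> real \<Rightarrow> real set" where
  "oint a b = {min a b<..<max a b}"

definition cond_S :: "(real \<Rightarrow> real) \<Rightarrow> real set \<Rightarrow> real set \<Rightarrow> real \<Rightarrow> bool" where
  "cond_S f J A \<epsilon> \<longleftrightarrow> (\<forall>a\<in>J. \<forall>b\<in>J. f a < f b \<longrightarrow>
      (\<exists>x \<in> A \<inter> oint a b. f x \<in> {f a - \<epsilon> <..< f b + \<epsilon>}))"

end

theory Submission
  imports Defs
begin

lemma meager_UN:
  fixes M :: "nat \<Rightarrow> real set"
  assumes "\<And>n. meager (M n)"
  shows "meager (\<Union>n. M n)"
proof -
  have "\<forall>n. \<exists>F. (\<forall>m::nat. nowhere_dense (F m)) \<and> M n \<subseteq> (\<Union>m. F m)"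
  proof
    fix n show "\<exists>F. (\<forall>m::nat. nowhere_dense (F m)) \<and> M n \<subseteq> (\<Union>m. F m)"
      using assms[of n] unfolding meager_def by assumption
  qed
  then have "\<exists>F. \<forall>n. (\<forall>m::nat. nowhere_dense (F n m)) \<and> M n \<subseteq> (\<Union>m. F n m)"
    by (rule choice)
  then obtain F where F0: "\<forall>n. (\<forall>m::nat. nowhere_dense (F n m)) \<and> M n \<subseteq> (\<Union>m. F n m)"
    by (elim exE) (rule that, assumption)
  have F: "\<And>n. (\<forall>m. nowhere_dense (F n m)) \<and> M n \<subseteq> (\<Union>m. F n m)"
    using F0 by (rule spec)
  define G where "G k = F (fst (prod_decode k)) (snd (prod_decode k))" for k
  show ?thesis unfolding meager_def
  proof (intro exI[of _ G] conjI allI)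
    fix k show "nowhere_dense (G k)" using F by (simp add: G_def)
  next
    show "(\<Union>n. M n) \<subseteq> (\<Union>k. G k)"
    proof
      fix x assume "x \<in> (\<Union>n. M n)"
      then obtain n m where "x \<in> F n m" using F by blast
      then have "x \<in> G (prod_encode (n,m))" by (simp add: G_def)
      thus "x \<in> (\<Union>k. G k)" by blast
    qed
  qed
qed

lemma residual_Int:
  assumes "residual A" "residual B" shows "residual (A \<inter> B)"
proof -
  have "- (A \<inter> B) = (\<Union>n::nat. if n = 0 then - A else - B)"
  proof (rule set_eqI)
    fix x
    have "x \<in> (\<Union>n::nat. if n = 0 then - A else - B) \<longleftrightarrow> x \<notin> A \<or> x \<notin> B"
    proof
      assume "x \<notin> A \<or> x \<notin> B"
      then show "x \<in> (\<Union>n::nat. if n = 0 then - A else - B)"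
      proof
        assume "x \<notin> A" then show ?thesis by (intro UN_I[of 0]) auto
      next
        assume "x \<notin> B"
        then have "x \<in> (if Suc 0 = 0 then - A else - B)" by simp
        then have "\<exists>n. x \<in> (if (n::nat) = 0 then - A else - B)" by (rule exI)
        then show ?thesis by (simp only: UN_iff bex_UNIV)
      qed
    qed (auto split: if_splits)
    then show "x \<in> - (A \<inter> B) \<longleftrightarrow> x \<in> (\<Union>n::nat. if n = 0 then - A else - B)" by auto
  qed
  moreover have "meager (\<Union>n::nat. if n = 0 then - A else - B)"
    by (rule meager_UN) (use assms in \<open>auto simp: residual_def\<close>)
  ultimately show ?thesis by (simp add: residual_def)
qed

lemma residual_dense:
  assumes "residual A" "open U" "U \<noteq> {}"
  shows "A \<inter> U \<noteq> {}"
proof -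
  obtain F :: "nat \<Rightarrow> real set" where F0: "\<forall>n. nowhere_dense (F n)" and F2: "- A \<subseteq> (\<Union>n. F n)"
    using assms(1) unfolding residual_def meager_def by (elim exE conjE) (rule that, assumption+)
  have F: "\<And>n. nowhere_dense (F n)" "- A \<subseteq> (\<Union>n. F n)" using F0 F2 by auto
  define G where "G = range (\<lambda>n. - closure (F n))"
  have "UNIV \<subseteq> closure (\<Inter>G)"
  proof (rule Baire)
    show "countable G" by (simp add: G_def)
    fix T assume "T \<in> G"
    then obtain n where T: "T = - closure (F n)" by (auto simp: G_def)
    have "closure T = UNIV"
      using F(1)[of n] by (simp add: T closure_complement nowhere_dense_def)
    then show "openin (top_of_set UNIV) T \<and> UNIV \<subseteq> closure T"
      by (simp add: T open_Compl)
  qed auto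
  moreover have "\<Inter>G \<subseteq> A"
  proof
    fix x assume "x \<in> \<Inter>G"
    then have "\<forall>n. x \<notin> closure (F n)" by (auto simp: G_def)
    then have "\<forall>n. x \<notin> F n" using closure_subset by blast
    then show "x \<in> A" using F(2) by blast
  qed
  ultimately have "closure A = UNIV" using closure_mono by blast
  then show ?thesis
    using assms(2,3) open_Int_closure_eq_empty[of U A] by (auto simp: Int_commute)
qed

lemma baire_cont:
  assumes "has_baire_property f"
  shows "\<exists>A. residual A \<and> continuous_on A f"
proof -
  obtain B :: "nat \<Rightarrow> real set" where "inj B" and B: "\<And>n. open (B n)"
    "\<And>S. open S \<Longrightarrow> \<exists>k. S = \<Union>{B n |n. n \<in> k}"
    by (rule univ_second_countable_sequence) blast
  have "\<forall>n. \<exists>U. open U \<and> meager ((f -` B n - U) \<union> (U - f -` B n))"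
    using assms B(1) unfolding has_baire_property_def has_baire_property_set_def by blast
  then obtain G where G: "\<And>n. open (G n) \<and> meager ((f -` B n - G n) \<union> (G n - f -` B n))"
    by metis
  define A where "A = - (\<Union>n. (f -` B n - G n) \<union> (G n - f -` B n))"
  have "residual A" unfolding residual_def A_def double_compl
    by (rule meager_UN) (use G in blast)
  moreover have "continuous_on A f"
    unfolding continuous_on_open_invariant
  proof (intro allI impI)
    fix V :: "real set" assume "open V"
    then obtain k where k: "V = \<Union>{B n |n. n \<in> k}" using B(2) by blast
    have eq: "\<And>x n. x \<in> A \<Longrightarrow> x \<in> G n \<longleftrightarrow> f x \<in> B n" by (auto simp: A_def)
    have "(\<Union>n\<in>k. G n) \<inter> A = f -` V \<inter> A"
      using eq by (auto simp: k)
    moreover have "open (\<Union>n\<in>k. G n)" using G by auto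
    ultimately show "\<exists>W. open W \<and> W \<inter> A = f -` V \<inter> A" by blast
  qed
  ultimately show ?thesis by blast
qed

lemma transfer_S:
  assumes "residual A0" "continuous_on A0 f" "cond_S f I A0 \<epsilon>" "residual A"
  shows "cond_S f I A \<epsilon>"
  unfolding cond_S_def
proof (intro ballI impI)
  fix a b assume ab: "a \<in> I" "b \<in> I" "f a < f b"
  then obtain x where x: "x \<in> A0" "x \<in> oint a b" "f x \<in> {f a - \<epsilon> <..< f b + \<epsilon>}"
    using assms(3) unfolding cond_S_def by blast
  have "open {f a - \<epsilon> <..< f b + \<epsilon>}" by simp
  then obtain W where W: "open W" "W \<inter> A0 = f -` {f a - \<epsilon> <..< f b + \<epsilon>} \<inter> A0"
    using assms(2) unfolding continuous_on_open_invariant by blast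
  have "x \<in> W \<inter> oint a b" using x W by auto
  moreover have "open (W \<inter> oint a b)" using W by (auto simp: oint_def)
  ultimately have "(A \<inter> A0) \<inter> (W \<inter> oint a b) \<noteq> {}"
    using residual_dense[OF residual_Int[OF assms(4,1)]] by blast
  then obtain y where "y \<in> A" "y \<in> A0" "y \<in> W" "y \<in> oint a b" by blast
  then show "\<exists>y \<in> A \<inter> oint a b. f y \<in> {f a - \<epsilon> <..< f b + \<epsilon>}"
    using W by blast
qed

theorem lemma2:
  fixes f :: "real \<Rightarrow> real" and I :: "real set" and \<epsilon> :: real
  assumes "has_baire_property f"
    and "open I" and "is_interval I"
    and "\<epsilon> \<ge> 0"
  shows "((\<forall>A. residual A \<longrightarrow> cond_S f I A \<epsilon>)
          \<longleftrightarrow> (\<forall>A. residual A \<and> continuous_on A f \<longrightarrow> cond_S f I A \<epsilon>))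
       \<and> ((\<forall>A. residual A \<and> continuous_on A f \<longrightarrow> cond_S f I A \<epsilon>)
          \<longleftrightarrow> (\<exists>A. residual A \<and> continuous_on A f \<and> cond_S f I A \<epsilon>))"
  using baire_cont[OF assms(1)] transfer_S by blast

end
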